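(* Let $n\geq 3$, let $H$ be a $1$-dimensional linear subspace of $\mathbb{R}^n$, and let $O(n)_H=\{\psi\in O(n): \psi x=x \text{ for all } x\in H\}$ be its pointwise stabilizer in $O(n)$. Let $\phi\in O(n)$ be such that $\phi H\neq H$. If $E\subset S^{n-1}$ is nonempty, closed, and satisfies $\phi E=E$ and $\psi E=E$ for every $\psi\in O(n)_H$, then $E=S^{n-1}$.
   Context: $S^{n-1}$ is the unit sphere in $\mathbb{R}^n$ and $O(n)$ the orthogonal group. *)

theory Defs
  imports "HOL-Analysis.Analysis"
begin

definition pointwise_stabilizer :: "('a::real_inner) set \<Rightarrow> ('a \<Rightarrow> 'a) set" where
  "pointwise_stabilizer H = {\<psi>. orthogonal_transformation \<psi> \<and> (\<forall>x\<in>H. \<psi> x = x)}"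

end

theory Submission
  imports Defs
begin

definition DD :: "real \<Rightarrow> real \<Rightarrow> real \<Rightarrow> real" where
  "DD c p q = 1 - c^2 - p^2 - q^2 + 2*c*p*q"

lemma interval_lemma:
  fixes T :: "real set"
  assumes T: "closed T" "T \<noteq> {}" "T \<subseteq> {-1..1}" and c: "\<bar>c\<bar> < 1"
    and cl: "\<And>p q. p \<in> T \<Longrightarrow> DD c p q \<ge> 0 \<Longrightarrow> q \<in> T"
  shows "{-1..1} \<subseteq> T"
proof -
  define S where "S = {-1<..<(1::real)}"
  define U where "U = (\<Union>q\<in>T. {p. DD c q p > 0})"
  have key: "DD c p (c*p) = (1-c^2)*(1-p^2)" for p
    by (simp add: DD_def power2_eq_square algebra_simps)
  have sym: "DD c p q = DD c q p" for p q by (simp add: DD_def algebra_simps)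
  have pos: "0 < 1 - c^2"
    using c by (simp add: abs_square_less_1)
  have "open U"
    unfolding U_def DD_def
    by (intro open_UN ballI open_Collect_less) (auto intro!: continuous_intros)
  have eq: "S \<inter> T = S \<inter> U"
  proof
    show "S \<inter> T \<subseteq> S \<inter> U"
    proof
      fix p assume p: "p \<in> S \<inter> T"
      then have "p^2 < 1" by (auto simp: S_def abs_square_less_1 abs_less_iff)
      then have "DD c p (c*p) > 0" using key pos by simp
      moreover have "c*p \<in> T" using cl[of p "c*p"] p key pos \<open>p^2<1\<close> by simp
      ultimately show "p \<in> S \<inter> U" using p sym unfolding U_def by auto
    qed
  next
    show "S \<inter> U \<subseteq> S \<inter> T"
      unfolding U_def using cl sym by (auto intro: less_imp_le)
  qed
  obtain p0 where p0: "p0 \<in> T" using T by auto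
  then have "p0^2 \<le> 1" using T(3) by (force simp: abs_square_le_1 abs_le_iff)
  then have "c*p0 \<in> T" using cl[of p0 "c*p0"] p0 key pos by simp
  moreover have "\<bar>c*p0\<bar> < 1"
  proof -
    have "\<bar>p0\<bar> \<le> 1" using subsetD[OF T(3) p0] by auto
    then have "\<bar>c*p0\<bar> \<le> \<bar>c\<bar>" by (simp add: abs_mult mult_left_le)
    then show ?thesis using c by simp
  qed
  ultimately have ne: "S \<inter> T \<noteq> {}" by (auto simp: S_def abs_less_iff)
  have "connected S" by (simp add: S_def)
  moreover have "openin (top_of_set S) (S \<inter> T)"
    using eq \<open>open U\<close> by (simp add: openin_open_Int)
  moreover have "closedin (top_of_set S) (S \<inter> T)"
    using T(1) by (simp add: closedin_closed_Int)
  ultimately have "S \<inter> T = S" using ne unfolding connected_clopen by blast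
  then have "S \<subseteq> T" by blast
  then have "closure S \<subseteq> T" using T(1) by (simp add: closure_minimal)
  then show ?thesis by (simp add: S_def)
qed

lemma reflect_lemma:
  fixes x y :: "'a::euclidean_space"
  assumes "norm x = norm y"
  shows "\<exists>\<psi>. orthogonal_transformation \<psi> \<and> \<psi> x = y \<and>
    (\<forall>h. h \<bullet> (x - y) = 0 \<longrightarrow> \<psi> h = h)"
proof (cases "x = y")
  case True
  then show ?thesis by (intro exI[of _ "\<lambda>z. z"]) simp
next
  case False
  define w where "w = x - y"
  have ww: "w \<bullet> w \<noteq> 0" using False by (simp add: w_def)
  define \<psi> where "\<psi> z = z - (2 * (z \<bullet> w) / (w \<bullet> w)) *\<^sub>R w" for z
  have lin: "linear \<psi>"
    unfolding \<psi>_def by (rule linearI) (auto simp: inner_add_left algebra_simps add_divide_distrib)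
  have "\<psi> z \<bullet> \<psi> z = z \<bullet> z" for z
  proof -
    have "\<psi> z \<bullet> \<psi> z = z \<bullet> z - 4 * (z \<bullet> w)^2 / (w \<bullet> w) + 4 * (z \<bullet> w)^2 / (w \<bullet> w)^2 * (w \<bullet> w)"
      unfolding \<psi>_def by (simp add: inner_diff_left inner_diff_right inner_commute power2_eq_square algebra_simps)
    also have "\<dots> = z \<bullet> z" using ww by (simp add: power2_eq_square)
    finally show ?thesis .
  qed
  then have ot: "orthogonal_transformation \<psi>"
    using lin by (simp add: orthogonal_transformation norm_eq_sqrt_inner)
  have xx: "x \<bullet> x = y \<bullet> y" using assms by (simp add: dot_square_norm)
  have h: "w \<bullet> w = 2 * (x \<bullet> w)"
    unfolding w_def using xx by (simp add: inner_diff_left inner_diff_right inner_commute)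
  then have "2 * (x \<bullet> w) / (w \<bullet> w) = 1" using ww by (metis divide_self)
  then have "\<psi> x = x - 1 *\<^sub>R w" unfolding \<psi>_def by (simp only:)
  then have "\<psi> x = y" by (simp add: w_def)
  moreover have "\<psi> h = h" if "h \<bullet> (x - y) = 0" for h
    using that unfolding \<psi>_def w_def by simp
  ultimately show ?thesis using ot by blast
qed

lemma point_lemma:
  fixes u v :: "'a::euclidean_space"
  assumes dim: "DIM('a) \<ge> 3" and u: "norm u = 1" and v: "norm v = 1"
    and c: "\<bar>u \<bullet> v\<bar> < 1" and D: "DD (u \<bullet> v) p q \<ge> 0"
  shows "\<exists>y. norm y = 1 \<and> y \<bullet> u = p \<and> y \<bullet> v = q"
proof -
  define c where "c = u \<bullet> v"
  have uu: "u \<bullet> u = 1" using u by (simp add: norm_eq_1)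
  have vv: "v \<bullet> v = 1" using v by (simp add: norm_eq_1)
  have pos: "0 < 1 - c^2"
    using c by (simp add: abs_square_less_1 c_def)
  define e where "e = v - c *\<^sub>R u"
  have eu: "e \<bullet> u = 0" by (simp add: e_def inner_diff_left uu c_def inner_commute[of v u])
  have ev: "e \<bullet> v = 1 - c^2" by (simp add: e_def inner_diff_left vv c_def power2_eq_square)
  have ee: "e \<bullet> e = 1 - c^2" using eu ev by (simp add: e_def inner_diff_right inner_commute[of u e])
  have "dim {u, v} \<le> card {u, v}" by (rule dim_le_card) (auto intro: span_base)
  also have "\<dots> \<le> 2" by (simp add: card_insert_le_m1)
  finally have "dim {u, v} < DIM('a)" using dim by simp
  then obtain w0 where w0: "w0 \<noteq> 0" "\<And>y. y \<in> span {u, v} \<Longrightarrow> orthogonal w0 y"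
    using orthogonal_to_subspace_exists by blast
  define w where "w = w0 /\<^sub>R norm w0"
  have wu: "w \<bullet> u = 0" using w0(2)[of u] by (simp add: w_def orthogonal_def span_base)
  have wv: "w \<bullet> v = 0" using w0(2)[of v] by (simp add: w_def orthogonal_def span_base)
  have we: "w \<bullet> e = 0" using wu wv by (simp add: e_def inner_diff_right)
  have nw: "norm w = 1" using w0(1) by (simp add: w_def)
  have ww: "w \<bullet> w = 1" using nw by (simp add: norm_eq_1)
  define a where "a = (q - c * p) / (1 - c^2)"
  define b where "b = sqrt (DD c p q / (1 - c^2))"
  have b2: "b^2 = DD c p q / (1 - c^2)" using D pos by (simp add: b_def c_def)
  define y where "y = p *\<^sub>R u + a *\<^sub>R e + b *\<^sub>R w"
  have yu: "y \<bullet> u = p" using eu wu uu by (simp add: y_def inner_add_left)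
  have "y \<bullet> v = p * c + a * (1 - c^2)" using ev wv by (simp add: y_def inner_add_left c_def)
  also have "\<dots> = q" using pos by (simp add: a_def)
  finally have yv: "y \<bullet> v = q" .
  have "y \<bullet> y = p^2 + a^2 * (e \<bullet> e) + b^2"
    using eu wu we uu ww
    by (simp add: y_def inner_add_left inner_add_right inner_commute power2_eq_square algebra_simps)
  also have "\<dots> = p^2 + a^2 * (1 - c^2) + b^2" by (simp only: ee)
  also have "\<dots> = p^2 + ((q - c*p)^2 + DD c p q) / (1 - c^2)"
    using pos unfolding b2 by (simp add: a_def power_divide power2_eq_square add_divide_distrib)
  also have "(q - c*p)^2 + DD c p q = (1 - c^2) * (1 - p^2)"
    by (simp add: DD_def power2_eq_square algebra_simps)
  also have "p^2 + (1 - c^2) * (1 - p^2) / (1 - c^2) = 1"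
    using pos by simp
  finally have "norm y = 1" by (simp add: norm_eq_1)
  then show ?thesis using yu yv by blast
qed


theorem lemma3p1:
  fixes H E :: "(real ^ 'n) set" and \<phi> :: "real ^ 'n \<Rightarrow> real ^ 'n"
  assumes "CARD('n) \<ge> 3"
    and "subspace H" and "dim H = 1"
    and "orthogonal_transformation \<phi>" and "\<phi> ` H \<noteq> H"
    and "E \<subseteq> sphere 0 1" and "E \<noteq> {}" and "closed E"
    and "\<phi> ` E = E"
    and "\<And>\<psi>. \<psi> \<in> pointwise_stabilizer H \<Longrightarrow> \<psi> ` E = E"
  shows "E = sphere 0 1"
proof -
  note ot = assms(4)
  obtain B where B: "B \<subseteq> H" "independent B" "H \<subseteq> span B" "card B = dim H"
    using basis_exists by blast
  obtain b where Bb: "B = {b}" by (metis B(4) assms(3) card_1_singletonE)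
  have "b \<noteq> 0" using B(2) Bb dependent_zero by blast
  have "span B \<subseteq> H" by (rule span_minimal[OF B(1) assms(2)])
  with B(3) have "H = span B" by (rule subset_antisym)
  then have Hsp: "H = span {b}" by (simp only: Bb)
  define u where "u = b /\<^sub>R norm b"
  have nu: "norm u = 1" using \<open>b \<noteq> 0\<close> by (simp add: u_def)
  have bu: "b = norm b *\<^sub>R u" using \<open>b \<noteq> 0\<close> by (simp add: u_def)
  have "range (\<lambda>k. k *\<^sub>R b) = range (\<lambda>k. k *\<^sub>R u)"
  proof (intro set_eqI iffI)
    fix x assume "x \<in> range (\<lambda>k. k *\<^sub>R b)"
    then obtain k where "x = k *\<^sub>R b" by auto
    then have "x = (k * norm b) *\<^sub>R u" using bu by (metis scaleR_scaleR)
    then show "x \<in> range (\<lambda>k. k *\<^sub>R u)" by blast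
  next
    fix x assume "x \<in> range (\<lambda>k. k *\<^sub>R u)"
    then obtain k where "x = k *\<^sub>R u" by auto
    then have "x = (k / norm b) *\<^sub>R b" by (simp add: u_def divide_inverse)
    then show "x \<in> range (\<lambda>k. k *\<^sub>R b)" by blast
  qed
  then have Hu: "H = range (\<lambda>k. k *\<^sub>R u)" using Hsp by (simp add: span_singleton)
  define v where "v = \<phi> u"
  have nv: "norm v = 1" using nu ot by (simp add: v_def orthogonal_transformation_norm)
  have phiH: "\<phi> ` H = range (\<lambda>k. k *\<^sub>R v)"
    unfolding Hu v_def image_image using ot by (simp add: orthogonal_transformation_scaleR)
  have c1: "\<bar>u \<bullet> v\<bar> < 1"
  proof (rule ccontr)
    assume "\<not> \<bar>u \<bullet> v\<bar> < 1"
    moreover have "\<bar>u \<bullet> v\<bar> \<le> 1" using Cauchy_Schwarz_ineq2[of u v] nu nv by simp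
    ultimately have "\<bar>u \<bullet> v\<bar> = norm u * norm v" using nu nv by simp
    then have "norm u *\<^sub>R v = norm v *\<^sub>R u \<or> norm u *\<^sub>R v = - norm v *\<^sub>R u"
      using norm_cauchy_schwarz_abs_eq[of u v] by blast
    then have "v = u \<or> v = - u" using nu nv by simp
    then have "range (\<lambda>k. k *\<^sub>R v) = range (\<lambda>k. k *\<^sub>R u)"
    proof
      assume "v = - u"
      show ?thesis
      proof (intro set_eqI iffI)
        fix x assume "x \<in> range (\<lambda>k. k *\<^sub>R v)"
        then obtain k where "x = k *\<^sub>R v" by auto
        then have "x = (- k) *\<^sub>R u" using \<open>v = - u\<close> by simp
        then show "x \<in> range (\<lambda>k. k *\<^sub>R u)" by blast
      next
        fix x assume "x \<in> range (\<lambda>k. k *\<^sub>R u)"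
        then obtain k where "x = k *\<^sub>R u" by auto
        then have "x = (- k) *\<^sub>R v" using \<open>v = - u\<close> by simp
        then show "x \<in> range (\<lambda>k. k *\<^sub>R v)" by blast
      qed
    qed simp
    then show False using assms(5) phiH Hu by simp
  qed
  define T where "T = (\<lambda>x. x \<bullet> u) ` E"
  have "compact E" unfolding compact_eq_bounded_closed
    using bounded_subset[OF bounded_sphere assms(6)] assms(8) by simp
  then have "compact T" unfolding T_def
    by (rule compact_continuous_image[rotated]) (auto intro!: continuous_intros)
  then have Tc: "closed T" by (rule compact_imp_closed)
  have Tne: "T \<noteq> {}" using assms(7) by (simp add: T_def)
  have Tsub: "T \<subseteq> {-1..1}"
  proof
    fix t assume "t \<in> T"
    then obtain x where x: "x \<in> E" "t = x \<bullet> u" by (auto simp: T_def)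
    have "norm x = 1" using x assms(6) by auto
    then have "\<bar>x \<bullet> u\<bar> \<le> 1" using Cauchy_Schwarz_ineq2[of x u] nu by simp
    then show "t \<in> {-1..1}" using x by (simp add: abs_le_iff)
  qed
  have key1: "y \<in> E" if y: "norm y = 1" "y \<bullet> u \<in> T" for y
  proof -
    obtain x where x: "x \<in> E" "y \<bullet> u = x \<bullet> u" using y by (auto simp: T_def)
    have nxy: "norm x = norm y" using x assms(6) y by auto
    obtain \<psi> where \<psi>: "orthogonal_transformation \<psi>" "\<psi> x = y"
      "\<And>h. h \<bullet> (x - y) = 0 \<Longrightarrow> \<psi> h = h"
      using reflect_lemma[OF nxy] by auto
    have "\<psi> h = h" if "h \<in> H" for h
    proof -
      obtain k where "h = k *\<^sub>R u" using \<open>h \<in> H\<close> Hu by auto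
      then have "h \<bullet> (x - y) = 0" using x(2) by (simp add: inner_diff_right inner_commute)
      then show ?thesis by (rule \<psi>(3))
    qed
    then have "\<psi> \<in> pointwise_stabilizer H" using \<psi>(1) by (simp add: pointwise_stabilizer_def)
    then have "\<psi> ` E = E" by (rule assms(10))
    then show "y \<in> E" using x(1) \<psi>(2) by blast
  qed
  have key2: "y \<bullet> v \<in> T" if "y \<in> E" for y
  proof -
    have "y \<in> \<phi> ` E" using that assms(9) by simp
    then obtain z where z: "z \<in> E" "y = \<phi> z" by blast
    have "y \<bullet> v = z \<bullet> u" using z ot by (simp add: v_def orthogonal_transformation_def)
    then show ?thesis using z by (simp add: T_def)
  qed
  have cl: "q \<in> T" if pT: "p \<in> T" and Dpq: "DD (u \<bullet> v) p q \<ge> 0" for p q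
  proof -
    have dim3: "DIM(real ^ 'n) \<ge> 3" using assms(1) by simp
    obtain y where y: "norm y = 1" "y \<bullet> u = p" "y \<bullet> v = q"
      using point_lemma[OF dim3 nu nv c1 Dpq] by blast
    have "y \<in> E" using key1 y pT by simp
    then have "y \<bullet> v \<in> T" by (rule key2)
    then show ?thesis using y(3) by simp
  qed
  have all: "{-1..1} \<subseteq> T" by (rule interval_lemma[OF Tc Tne Tsub c1 cl])
  show ?thesis
  proof
    show "E \<subseteq> sphere 0 1" by (rule assms(6))
  next
    show "sphere 0 1 \<subseteq> E"
    proof
      fix y :: "real ^ 'n" assume "y \<in> sphere 0 1"
      then have ny: "norm y = 1" by simp
      then have "\<bar>y \<bullet> u\<bar> \<le> 1" using Cauchy_Schwarz_ineq2[of y u] nu by simp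
      then have "y \<bullet> u \<in> T" using all by (auto simp: abs_le_iff)
      then show "y \<in> E" using key1 ny by simp
    qed
  qed
qed

end
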